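(* Let $G$ be a bipartite graph with $v$ vertices in each of its two colour classes and with $e$ edges. If the girth of $G$ is at least $8$, then $$e<v^{4/3}+\frac{2}{3}v-\frac{2}{9}v^{2/3}-\frac{20}{81}v^{1/3}.$$ *)

theory Defs
  imports Complex_Main
begin

definition has_cycle_of_length :: "'a set set \<Rightarrow> nat \<Rightarrow> bool" where
  "has_cycle_of_length E k \<longleftrightarrow>
     3 \<le> k \<and> (\<exists>xs. length xs = k \<and> distinct xs \<and>
                  (\<forall>i<k. {xs ! i, xs ! ((i + 1) mod k)} \<in> E))"

definition girth_at_least :: "'a set set \<Rightarrow> nat \<Rightarrow> bool" where
  "girth_at_least E g \<longleftrightarrow> (\<forall>k<g. \<not> has_cycle_of_length E k)"

definition bipartite_graph :: "'a set \<Rightarrow> 'a set \<Rightarrow> 'a set set \<Rightarrow> bool" where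
  "bipartite_graph A B E \<longleftrightarrow> finite A \<and> finite B \<and> A \<inter> B = {} \<and>
     E \<subseteq> {{a, b} | a b. a \<in> A \<and> b \<in> B}"

end

theory Submission
  imports Defs "HOL-Analysis.Analysis"
begin



lemma cyc4:
  assumes "girth_at_least E 8" "distinct [x0,x1,x2,x3]"
    "{x0,x1} \<in> E" "{x1,x2} \<in> E" "{x2,x3} \<in> E" "{x3,x0} \<in> E"
  shows False
proof -
  let ?xs = "[x0,x1,x2,x3]"
  have "\<forall>i<4. {?xs ! i, ?xs ! ((i + 1) mod 4)} \<in> E"
  proof (intro allI impI)
    fix i :: nat assume "i < 4"
    then have "i = 0 \<or> i = 1 \<or> i = 2 \<or> i = 3" by linarith
    then show "{?xs ! i, ?xs ! ((i + 1) mod 4)} \<in> E"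
      using assms(3-6) by (elim disjE) simp_all
  qed
  then have "has_cycle_of_length E 4"
    unfolding has_cycle_of_length_def using assms(2) by (intro conjI exI[of _ ?xs]) simp_all
  then show False using assms(1) unfolding girth_at_least_def by auto
qed


definition nbr :: "'a set set \<Rightarrow> 'a \<Rightarrow> 'a set" where
  "nbr E x = {w. {x, w} \<in> E}"

lemma cyc6:
  assumes "girth_at_least E 8" "distinct [x0,x1,x2,x3,x4,x5]"
    "{x0,x1} \<in> E" "{x1,x2} \<in> E" "{x2,x3} \<in> E" "{x3,x4} \<in> E" "{x4,x5} \<in> E" "{x5,x0} \<in> E"
  shows False
proof -
  let ?xs = "[x0,x1,x2,x3,x4,x5]"
  have "\<forall>i<6. {?xs ! i, ?xs ! ((i + 1) mod 6)} \<in> E"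
  proof (intro allI impI)
    fix i :: nat assume "i < 6"
    then have "i = 0 \<or> i = 1 \<or> i = 2 \<or> i = 3 \<or> i = 4 \<or> i = 5" by linarith
    then show "{?xs ! i, ?xs ! ((i + 1) mod 6)} \<in> E"
      using assms(3-8) by (elim disjE) simp_all
  qed
  then have "has_cycle_of_length E 6"
    unfolding has_cycle_of_length_def using assms(2) by (intro conjI exI[of _ ?xs]) simp_all
  then show False using assms(1) unfolding girth_at_least_def by auto
qed

lemma bip_edge:
  assumes "bipartite_graph A B E" "ed \<in> E"
  shows "\<exists>a b. a \<in> A \<and> b \<in> B \<and> ed = {a,b}"
proof -
  have "E \<subseteq> {{a, b} |a b. a \<in> A \<and> b \<in> B}" using assms(1) unfolding bipartite_graph_def by simp
  then have "ed \<in> {{a, b} |a b. a \<in> A \<and> b \<in> B}" using assms(2) by (rule subsetD)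
  then show ?thesis by auto
qed

lemma bip_finite:
  assumes "bipartite_graph A B E" shows "finite E"
proof -
  have "E \<subseteq> (\<lambda>(a,b). {a,b}) ` (A \<times> B)"
    using assms unfolding bipartite_graph_def by auto
  moreover have "finite (A \<times> B)" using assms unfolding bipartite_graph_def by auto
  ultimately show ?thesis by (meson finite_surj)
qed

lemma nbr_A:
  assumes "bipartite_graph A B E" "a \<in> A" shows "nbr E a \<subseteq> B"
proof
  fix w assume "w \<in> nbr E a"
  then have "{a,w} \<in> E" by (simp add: nbr_def)
  then obtain a' b' where "a' \<in> A" "b' \<in> B" "{a,w} = {a',b'}" using bip_edge[OF assms(1)] by blast
  then show "w \<in> B" using assms unfolding bipartite_graph_def doubleton_eq_iff by auto
qed

lemma nbr_B:
  assumes "bipartite_graph A B E" "b \<in> B" shows "nbr E b \<subseteq> A"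
proof
  fix w assume "w \<in> nbr E b"
  then have "{b,w} \<in> E" by (simp add: nbr_def)
  then obtain a' b' where "a' \<in> A" "b' \<in> B" "{b,w} = {a',b'}" using bip_edge[OF assms(1)] by blast
  then show "w \<in> A" using assms unfolding bipartite_graph_def doubleton_eq_iff by auto
qed

lemma nbr_out:
  assumes "bipartite_graph A B E" "x \<notin> A \<union> B" shows "nbr E x = {}"
proof -
  { fix w assume "{x,w} \<in> E"
    then obtain a' b' where "a' \<in> A" "b' \<in> B" "{x,w} = {a',b'}" using bip_edge[OF assms(1)] by blast
    then have False using assms unfolding doubleton_eq_iff by auto }
  then show ?thesis by (auto simp: nbr_def)
qed

lemma nbr_finite:
  assumes "bipartite_graph A B E" shows "finite (nbr E x)"
proof -
  have "nbr E x \<subseteq> A \<union> B" using nbr_A[OF assms] nbr_B[OF assms] nbr_out[OF assms]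
    by (cases "x \<in> A"; cases "x \<in> B") auto
  then show ?thesis using assms unfolding bipartite_graph_def by (meson finite_Un finite_subset)
qed

definition deg :: "'a set set \<Rightarrow> 'a \<Rightarrow> nat" where
  "deg E x = card (nbr E x)"

lemma counting:
  assumes bip: "bipartite_graph A B E" and gi: "girth_at_least E 8"
    and EP_def: "EP = {(a,b). a \<in> A \<and> b \<in> B \<and> {a,b} \<in> E}"
  shows "card EP + (\<Sum>(a',b)\<in>EP. (deg E b - 1) * (deg E a' - 1)) \<le> card A * card B"
proof -
  have dis: "\<And>x. x \<in> A \<Longrightarrow> x \<notin> B" and fA: "finite A" and fB: "finite B"
    using bip unfolding bipartite_graph_def by auto
  have EPAB: "EP \<subseteq> A \<times> B" unfolding EP_def by auto
  have fEP: "finite EP" using EPAB fA fB finite_subset by blast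
  define P where "P = (SIGMA p:EP. (nbr E (snd p) - {fst p}) \<times> (nbr E (fst p) - {snd p}))"
  have fin_nbr: "\<And>x. finite (nbr E x)" using nbr_finite[OF bip] .
  have cardP: "card P = (\<Sum>p\<in>EP. card (nbr E (snd p) - {fst p}) * card (nbr E (fst p) - {snd p}))"
    unfolding P_def using fEP fin_nbr by (subst card_SigmaI) auto
  also have "\<dots> = (\<Sum>(a',b)\<in>EP. (deg E b - 1) * (deg E a' - 1))"
  proof (rule sum.cong)
    fix p assume "p \<in> EP"
    then obtain a' b where p: "p = (a',b)" "{a',b} \<in> E" unfolding EP_def by auto
    then have "a' \<in> nbr E b" "b \<in> nbr E a'" by (auto simp: nbr_def insert_commute)
    then show "card (nbr E (snd p) - {fst p}) * card (nbr E (fst p) - {snd p}) =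
       (case p of (a',b) \<Rightarrow> (deg E b - 1) * (deg E a' - 1))"
      using p fin_nbr by (simp add: deg_def card_Diff_singleton)
  qed simp
  finally have cardP': "card P = (\<Sum>(a',b)\<in>EP. (deg E b - 1) * (deg E a' - 1))" .
  have memP: "\<And>a1 b1 a b'. ((a1,b1),(a,b')) \<in> P \<Longrightarrow>
      a1 \<in> A \<and> b1 \<in> B \<and> a \<in> A \<and> b' \<in> B \<and> {a1,b1} \<in> E \<and> {b1,a} \<in> E \<and> a \<noteq> a1
       \<and> {a1,b'} \<in> E \<and> b' \<noteq> b1"
  proof -
    fix a1 b1 a b' assume "((a1,b1),(a,b')) \<in> P"
    then have h: "a1 \<in> A" "b1 \<in> B" "{a1,b1} \<in> E" "a \<in> nbr E b1" "a \<noteq> a1" "b' \<in> nbr E a1" "b' \<noteq> b1"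
      unfolding P_def EP_def by auto
    have "a \<in> A" using h(4) nbr_B[OF bip h(2)] by auto
    moreover have "b' \<in> B" using h(6) nbr_A[OF bip h(1)] by auto
    ultimately show "a1 \<in> A \<and> b1 \<in> B \<and> a \<in> A \<and> b' \<in> B \<and> {a1,b1} \<in> E \<and> {b1,a} \<in> E \<and> a \<noteq> a1
       \<and> {a1,b'} \<in> E \<and> b' \<noteq> b1" using h by (auto simp: nbr_def)
  qed
  have inj: "inj_on snd P"
  proof (rule inj_onI)
    fix x y assume x: "x \<in> P" and y: "y \<in> P" and eq: "snd x = snd y"
    obtain a1 b1 a b' where xx: "x = ((a1,b1),(a,b'))" by (metis prod.collapse)
    obtain a2 b2 where yy: "y = ((a2,b2),(a,b'))" using eq xx by (metis prod.collapse snd_conv)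
    note h1 = memP[OF x[unfolded xx]] and h2 = memP[OF y[unfolded yy]]
    have "a1 = a2 \<and> b1 = b2"
    proof (rule ccontr)
      assume ne: "\<not> (a1 = a2 \<and> b1 = b2)"
      show False
      proof (cases "b1 = b2")
        case True
        then have "a1 \<noteq> a2" using ne by auto
        show False
          by (rule cyc4[OF gi, of b1 a1 b' a2])
             (use h1 h2 True \<open>a1 \<noteq> a2\<close> dis in \<open>auto simp: insert_commute\<close>)
      next
        case False
        show False
        proof (cases "a1 = a2")
          case True
          show False
            by (rule cyc4[OF gi, of a b1 a1 b2])
               (use h1 h2 True \<open>b1 \<noteq> b2\<close> dis in \<open>auto simp: insert_commute\<close>)
        next
          case False
          show False
            by (rule cyc6[OF gi, of a b1 a1 b' a2 b2])
               (use h1 h2 \<open>a1 \<noteq> a2\<close> \<open>b1 \<noteq> b2\<close> dis in \<open>auto simp: insert_commute\<close>)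
        qed
      qed
    qed
    then show "x = y" using xx yy by simp
  qed
  have img: "snd ` P \<subseteq> A \<times> B" using memP by force
  have disj: "EP \<inter> snd ` P = {}"
  proof (rule ccontr)
    assume "EP \<inter> snd ` P \<noteq> {}"
    then obtain a1 b1 a b' where x: "((a1,b1),(a,b')) \<in> P" and "(a,b') \<in> EP" by force
    then have ab: "{a,b'} \<in> E" unfolding EP_def by auto
    note h = memP[OF x]
    show False
      by (rule cyc4[OF gi, of a b1 a1 b'])
         (use h ab dis in \<open>auto simp: insert_commute\<close>)
  qed
  have fP: "finite (snd ` P)" using img fA fB finite_subset by blast
  have "card EP + card P = card EP + card (snd ` P)" using card_image[OF inj] by simp
  also have "\<dots> = card (EP \<union> snd ` P)" using card_Un_disjoint[OF fEP fP disj] by simp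
  also have "\<dots> \<le> card (A \<times> B)" using EPAB img fA fB by (intro card_mono) auto
  finally show ?thesis using cardP' by (simp add: card_cartesian_product)
qed




lemma phi_convex: "convex_on {2..} (\<lambda>t::real. t * ln (t - 1))"
proof (rule f''_ge0_imp_convex[where f' = "\<lambda>t. ln (t - 1) + t / (t - 1)"
      and f'' = "\<lambda>t. 1 / (t - 1) - 1 / (t - 1)^2"])
  show "convex {2::real..}" by (rule convex_real_interval)
next
  fix x :: real assume "x \<in> {2..}"
  then have x: "x \<ge> 2" by simp
  show "((\<lambda>t. t * ln (t - 1)) has_real_derivative ln (x - 1) + x / (x - 1)) (at x)"
    using x by (auto intro!: derivative_eq_intros simp: field_simps)
  show "((\<lambda>t. ln (t - 1) + t / (t - 1)) has_real_derivative 1 / (x - 1) - 1 / (x - 1)^2) (at x)"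
    using x by (auto intro!: derivative_eq_intros simp: field_simps power2_eq_square)
  have x1: "x - 1 \<le> (x - 1)^2" using x by (simp add: power2_eq_square)
  have "1 / (x - 1)^2 \<le> 1 / (x - 1)"
    by (rule divide_left_mono[OF x1]) (use x in auto)
  then show "0 \<le> 1 / (x - 1) - 1 / (x - 1)^2" by simp
qed

lemma prod_ln_bound:
  fixes x y c :: real
  assumes "x > 0" "y > 0" "c > 0"
  shows "c^2 * (1 + ln x + ln y - 2 * ln c) \<le> x * y"
proof -
  have c2: "c^2 > 0" using assms by simp
  have "ln (x * y / c^2) = ln x + ln y - 2 * ln c"
    using assms c2 by (simp add: ln_mult ln_div ln_realpow)
  then have "exp (ln x + ln y - 2 * ln c) = x * y / c^2"
    using assms c2 by (metis exp_ln divide_pos_pos mult_pos_pos)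
  then have "1 + (ln x + ln y - 2 * ln c) \<le> x * y / c^2"
    by (metis exp_ge_add_one_self)
  then have "(1 + (ln x + ln y - 2 * ln c)) * c^2 \<le> x * y"
    using c2 by (simp add: pos_le_divide_eq)
  then show ?thesis by (simp add: algebra_simps)
qed



definition fF :: "real \<Rightarrow> real" where "fF t = t^3 - 2*t^2 + 2*t"

lemma EP_props:
  assumes bip: "bipartite_graph A B E"
    and EP_def: "EP = {(a,b). a \<in> A \<and> b \<in> B \<and> {a,b} \<in> E}"
  shows "card EP = card E"
    and "\<And>h::'a\<Rightarrow>real. (\<Sum>p\<in>EP. h (fst p)) = (\<Sum>a\<in>A. real (deg E a) * h a)"
    and "\<And>h::'a\<Rightarrow>real. (\<Sum>p\<in>EP. h (snd p)) = (\<Sum>b\<in>B. real (deg E b) * h b)"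
proof -
  have dis: "\<And>x. x \<in> A \<Longrightarrow> x \<notin> B" and fA: "finite A" and fB: "finite B"
    using bip unfolding bipartite_graph_def by auto
  have "bij_betw (\<lambda>(a,b). {a,b}) EP E"
  proof (rule bij_betw_imageI)
    show "inj_on (\<lambda>(a,b). {a,b}) EP"
    proof (rule inj_onI)
      fix p q assume "p \<in> EP" "q \<in> EP" "(\<lambda>(a,b). {a,b}) p = (\<lambda>(a,b). {a,b}) q"
      then show "p = q" unfolding EP_def using dis by (auto simp: doubleton_eq_iff)
    qed
    show "(\<lambda>(a,b). {a,b}) ` EP = E"
    proof
      show "(\<lambda>(a,b). {a,b}) ` EP \<subseteq> E" unfolding EP_def by auto
      show "E \<subseteq> (\<lambda>(a,b). {a,b}) ` EP"
      proof
        fix ed assume "ed \<in> E"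
        then obtain a b where "a \<in> A" "b \<in> B" "ed = {a,b}" using bip_edge[OF bip] by blast
        then show "ed \<in> (\<lambda>(a,b). {a,b}) ` EP" unfolding EP_def using \<open>ed \<in> E\<close>
          by (intro image_eqI[of _ _ "(a,b)"]) auto
      qed
    qed
  qed
  then show "card EP = card E" by (rule bij_betw_same_card)
  have fin_nbr: "\<And>x. finite (nbr E x)" using nbr_finite[OF bip] .
  have AB: "\<And>a b. a \<in> A \<Longrightarrow> {a,b} \<in> E \<Longrightarrow> b \<in> B"
    using nbr_A[OF bip] unfolding nbr_def by blast
  have EPA: "EP = Sigma A (nbr E)"
    unfolding EP_def using AB by (auto simp: nbr_def)
  fix h :: "'a \<Rightarrow> real"
  have "(\<Sum>p\<in>EP. h (fst p)) = (\<Sum>a\<in>A. \<Sum>b\<in>nbr E a. h a)"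
    unfolding EPA using fA fin_nbr by (subst sum.Sigma) (auto simp: case_prod_beta)
  also have "\<dots> = (\<Sum>a\<in>A. real (deg E a) * h a)" by (simp add: deg_def)
  finally show "(\<Sum>p\<in>EP. h (fst p)) = (\<Sum>a\<in>A. real (deg E a) * h a)" .
next
  have fA: "finite A" and fB: "finite B"
    using bip unfolding bipartite_graph_def by auto
  have fin_nbr: "\<And>x. finite (nbr E x)" using nbr_finite[OF bip] .
  have EPB: "EP = (\<lambda>(b,a). (a,b)) ` Sigma B (nbr E)"
    unfolding EP_def using nbr_B[OF bip] by (force simp: nbr_def insert_commute)
  have inj: "inj_on (\<lambda>(b,a). (a,b)) (Sigma B (nbr E))" by (auto simp: inj_on_def)
  fix h :: "'a \<Rightarrow> real"
  have "(\<Sum>p\<in>EP. h (snd p)) = (\<Sum>q\<in>Sigma B (nbr E). h (fst q))"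
    unfolding EPB by (subst sum.reindex[OF inj]) (auto simp: case_prod_beta intro!: sum.cong)
  also have "\<dots> = (\<Sum>b\<in>B. \<Sum>a\<in>nbr E b. h b)"
    using fB fin_nbr by (subst sum.Sigma) (auto simp: case_prod_beta)
  also have "\<dots> = (\<Sum>b\<in>B. real (deg E b) * h b)" by (simp add: deg_def)
  finally show "(\<Sum>p\<in>EP. h (snd p)) = (\<Sum>b\<in>B. real (deg E b) * h b)" .
qed




lemma core:
  assumes bip: "bipartite_graph A B E" and gi: "girth_at_least E 8"
    and md: "\<And>u. u \<in> A \<union> B \<Longrightarrow> deg E u \<ge> 2" and ne: "A \<union> B \<noteq> {}"
  shows "fF (2 * real (card E) / real (card A + card B)) \<le> real (card A + card B) / 2"
proof -
  define EP where "EP = {(a,b). a \<in> A \<and> b \<in> B \<and> {a,b} \<in> E}"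
  have dis: "A \<inter> B = {}" and fA: "finite A" and fB: "finite B"
    using bip unfolding bipartite_graph_def by auto
  define N where "N = real (card A + card B)"
  define e where "e = real (card E)"
  have cardU: "card (A \<union> B) = card A + card B" using card_Un_disjoint[OF fA fB dis] .
  have finU: "finite (A \<union> B)" using fA fB by simp
  have Npos: "N > 0" unfolding N_def using cardU finU ne by (metis card_gt_0_iff of_nat_0_less_iff)
  note EPp = EP_props[OF bip EP_def]
  have sumA: "(\<Sum>a\<in>A. real (deg E a)) = e"
    using EPp(2)[of "\<lambda>_. 1"] EPp(1) unfolding e_def by simp
  have sumB: "(\<Sum>b\<in>B. real (deg E b)) = e"
    using EPp(3)[of "\<lambda>_. 1"] EPp(1) unfolding e_def by simp
  have sumU: "(\<Sum>u\<in>A \<union> B. real (deg E u)) = 2 * e"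
  proof -
    have "(\<Sum>u\<in>A \<union> B. real (deg E u)) = (\<Sum>u\<in>A. real (deg E u)) + (\<Sum>u\<in>B. real (deg E u))"
      by (rule sum.union_disjoint[OF fA fB dis])
    then show ?thesis using sumA sumB by simp
  qed
  define D where "D = 2 * e / N"
  have "2 * N \<le> 2 * e"
  proof -
    have "(\<Sum>u\<in>A \<union> B. (2::real)) \<le> (\<Sum>u\<in>A \<union> B. real (deg E u))"
      using md by (intro sum_mono) auto
    then show ?thesis using sumU cardU unfolding N_def by simp
  qed
  then have D2: "D \<ge> 2" unfolding D_def using Npos by (simp add: field_simps)
  define c where "c = D - 1"
  have c1: "c \<ge> 1" unfolding c_def using D2 by simp
  have ND: "N * D = 2 * e" unfolding D_def using Npos by simp
  have J: "D * ln (D - 1) \<le> (\<Sum>u\<in>A \<union> B. (1/N) * (real (deg E u) * ln (real (deg E u) - 1)))"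
  proof -
    have "(\<lambda>t::real. t * ln (t - 1)) (\<Sum>u\<in>A \<union> B. (1/N) *\<^sub>R real (deg E u))
        \<le> (\<Sum>u\<in>A \<union> B. (1/N) * (\<lambda>t. t * ln (t - 1)) (real (deg E u)))"
      by (rule convex_on_sum[OF finU ne phi_convex])
         (use md cardU Npos in \<open>auto simp: N_def\<close>)
    moreover have "(\<Sum>u\<in>A \<union> B. (1/N) *\<^sub>R real (deg E u)) = D"
      unfolding D_def using sumU by (simp add: sum_divide_distrib[symmetric])
    ultimately show ?thesis by simp
  qed
  have J2: "2 * e * ln c \<le> (\<Sum>u\<in>A \<union> B. real (deg E u) * ln (real (deg E u) - 1))"
  proof -
    have "N * (D * ln (D - 1)) \<le> N * (\<Sum>u\<in>A \<union> B. (1/N) * (real (deg E u) * ln (real (deg E u) - 1)))"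
      using J Npos by simp
    also have "\<dots> = (\<Sum>u\<in>A \<union> B. real (deg E u) * ln (real (deg E u) - 1))"
      using Npos by (simp add: sum_distrib_left)
    finally show ?thesis using ND unfolding c_def by (simp add: mult.assoc[symmetric])
  qed
  define lg where "lg = (\<lambda>u. ln (real (deg E u) - 1))"
  have L: "(\<Sum>p\<in>EP. lg (fst p)) + (\<Sum>p\<in>EP. lg (snd p))
        = (\<Sum>u\<in>A \<union> B. real (deg E u) * ln (real (deg E u) - 1))"
  proof -
    have "(\<Sum>u\<in>A \<union> B. real (deg E u) * lg u) = (\<Sum>u\<in>A. real (deg E u) * lg u) + (\<Sum>u\<in>B. real (deg E u) * lg u)"
      by (rule sum.union_disjoint[OF fA fB dis])
    then show ?thesis using EPp(2)[of lg] EPp(3)[of lg] unfolding lg_def by simp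
  qed
  have EPmem: "\<And>p. p \<in> EP \<Longrightarrow> fst p \<in> A \<and> snd p \<in> B" unfolding EP_def by auto
  define S where "S = (\<Sum>p\<in>EP. (real (deg E (snd p)) - 1) * (real (deg E (fst p)) - 1))"
  have "(\<Sum>p\<in>EP. c^2 * (1 + lg (fst p) + lg (snd p) - 2 * ln c)) \<le> S"
    unfolding S_def
  proof (rule sum_mono)
    fix p assume "p \<in> EP"
    then have "deg E (fst p) \<ge> 2" "deg E (snd p) \<ge> 2" using EPmem md by auto
    then show "c^2 * (1 + lg (fst p) + lg (snd p) - 2 * ln c)
        \<le> (real (deg E (snd p)) - 1) * (real (deg E (fst p)) - 1)"
      unfolding lg_def using prod_ln_bound[of "real (deg E (fst p)) - 1" "real (deg E (snd p)) - 1" c] c1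
      by (simp add: mult.commute)
  qed
  moreover have "(\<Sum>p\<in>EP. c^2 * (1 + lg (fst p) + lg (snd p) - 2 * ln c))
      = c^2 * (e + ((\<Sum>p\<in>EP. lg (fst p)) + (\<Sum>p\<in>EP. lg (snd p))) - 2 * e * ln c)"
    using EPp(1) unfolding e_def
    by (simp add: sum.distrib sum_subtractf sum_distrib_left algebra_simps)
  moreover have "c^2 * e \<le> c^2 * (e + ((\<Sum>p\<in>EP. lg (fst p)) + (\<Sum>p\<in>EP. lg (snd p))) - 2 * e * ln c)"
  proof -
    have "e \<le> e + ((\<Sum>p\<in>EP. lg (fst p)) + (\<Sum>p\<in>EP. lg (snd p))) - 2 * e * ln c"
      using J2 L by linarith
    then show ?thesis by (rule mult_left_mono) simp
  qed
  ultimately have Sge: "c^2 * e \<le> S" by linarith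
  have cnt: "card EP + (\<Sum>(a',b)\<in>EP. (deg E b - 1) * (deg E a' - 1)) \<le> card A * card B"
    by (rule counting[OF bip gi EP_def])
  have "real (\<Sum>(a',b)\<in>EP. (deg E b - 1) * (deg E a' - 1)) = S"
    unfolding S_def of_nat_sum
  proof (rule sum.cong)
    fix p assume "p \<in> EP"
    then have "deg E (fst p) \<ge> 2" "deg E (snd p) \<ge> 2" using EPmem md by auto
    then show "real (case p of (a', b) \<Rightarrow> (deg E b - 1) * (deg E a' - 1))
       = (real (deg E (snd p)) - 1) * (real (deg E (fst p)) - 1)"
      by (simp add: case_prod_beta of_nat_diff)
  qed simp
  then have cnt2: "e + S \<le> real (card A) * real (card B)"
  proof -
    assume eqS: "real (\<Sum>(a',b)\<in>EP. (deg E b - 1) * (deg E a' - 1)) = S"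
    have "real (card EP + (\<Sum>(a',b)\<in>EP. (deg E b - 1) * (deg E a' - 1))) \<le> real (card A * card B)"
      using cnt by (simp only: of_nat_le_iff)
    then have "real (card EP) + real (\<Sum>(a',b)\<in>EP. (deg E b - 1) * (deg E a' - 1)) \<le> real (card A) * real (card B)"
      by (simp only: of_nat_add of_nat_mult)
    then show ?thesis using eqS EPp(1) unfolding e_def by simp
  qed
  have amgm: "4 * (real (card A) * real (card B)) \<le> N^2"
  proof -
    have "0 \<le> (real (card A) - real (card B))^2" by simp
    then show ?thesis unfolding N_def by (simp add: power2_eq_square algebra_simps)
  qed
  have H: "e + c^2 * e \<le> N^2 / 4" using cnt2 Sge amgm by linarith
  have e_eq: "e = N * D / 2" using ND by simp
  have h1: "N * (D * (1 + c^2) / 2) \<le> N * (N / 4)"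
  proof -
    have "N * (D * (1 + c^2) / 2) = e + c^2 * e" by (simp add: e_eq algebra_simps)
    moreover have "N * (N / 4) = N^2 / 4" by (simp add: power2_eq_square)
    ultimately show ?thesis using H by linarith
  qed
  then have h2: "D * (1 + c^2) / 2 \<le> N / 4" using Npos by (simp only: mult_le_cancel_left_pos)
  have "fF D = D * (1 + c^2)" unfolding fF_def c_def by (simp add: power2_eq_square power3_eq_cube algebra_simps)
  then have "fF D \<le> N / 2" using h2 by linarith
  then show ?thesis unfolding D_def N_def e_def .
qed




lemma fF_mono: assumes "x \<le> y" shows "fF x \<le> fF y"
proof -
  have Q: "0 \<le> x^2 + x*y + y^2 - 2*x - 2*y + 2"
  proof -
    have "x^2 + x*y + y^2 - 2*x - 2*y + 2 = (x + y/2 - 1)^2 + 3/4 * (y - 2/3)^2 + 2/3"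
      by (simp add: power2_eq_square algebra_simps)
    also have "\<dots> \<ge> 0" by (intro add_nonneg_nonneg) auto
    finally show ?thesis by simp
  qed
  have "fF y - fF x = (y - x) * (x^2 + x*y + y^2 - 2*x - 2*y + 2)"
    unfolding fF_def by (simp add: power2_eq_square power3_eq_cube algebra_simps)
  also have "\<dots> \<ge> 0" using assms Q by simp
  finally show ?thesis by simp
qed

lemma fF_small: assumes "u > 0" shows "fF (2 - u) \<le> 1 / u"
proof -
  have "u * fF (2 - u) = 1 - (1 - u)^4"
    unfolding fF_def by (simp add: power2_eq_square power3_eq_cube power4_eq_xxxx algebra_simps)
  also have "\<dots> \<le> 1" by simp
  finally show ?thesis using assms by (simp add: pos_le_divide_eq mult.commute)
qed

lemma girth_mono: "girth_at_least E g \<Longrightarrow> E' \<subseteq> E \<Longrightarrow> girth_at_least E' g"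
  unfolding girth_at_least_def has_cycle_of_length_def by blast

lemma mainL:
  assumes "bipartite_graph A B E" "girth_at_least E 8" "card A + card B > 0"
  shows "fF (2 * real (card E) / real (card A + card B)) \<le> real (card A + card B) / 2"
  using assms
proof (induction "card A + card B" arbitrary: A B E rule: less_induct)
  case less
  note bip = less.prems(1) and gi = less.prems(2) and pos = less.prems(3)
  define n where "n = card A + card B"
  have dis: "A \<inter> B = {}" and fA: "finite A" and fB: "finite B"
    using bip unfolding bipartite_graph_def by auto
  have npos: "real n > 0" using pos unfolding n_def by (simp only: of_nat_0_less_iff)
  show ?case
  proof (cases "card E < n")
    case True
    then have "2 * real (card E) \<le> 2 * real n - 2" by linarith
    then have "2 * real (card E) / real n \<le> 2 - 2 / real n"
      using npos by (simp add: field_simps)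
    then have "fF (2 * real (card E) / real n) \<le> fF (2 - 2 / real n)" by (rule fF_mono)
    also have "\<dots> \<le> 1 / (2 / real n)" using npos by (intro fF_small) simp
    finally show ?thesis unfolding n_def by simp
  next
    case False
    then have en: "card E \<ge> n" by simp
    show ?thesis
    proof (cases "\<forall>u\<in>A \<union> B. deg E u \<ge> 2")
      case True
      have "A \<union> B \<noteq> {}" using pos by auto
      then show ?thesis by (intro core[OF bip gi]) (use True in auto)
    next
      case False
      then obtain x where x0: "x \<in> A \<union> B" "\<not> 2 \<le> deg E x" by blast
      then have x: "x \<in> A \<union> B" "deg E x \<le> 1" by auto
      define A' where "A' = A - {x}"
      define B' where "B' = B - {x}"
      define E' where "E' = {ed \<in> E. x \<notin> ed}"
      have bip': "bipartite_graph A' B' E'"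
        unfolding bipartite_graph_def
      proof (intro conjI)
        show "finite A'" "finite B'" "A' \<inter> B' = {}" using fA fB dis by (auto simp: A'_def B'_def)
        show "E' \<subseteq> {{a, b} |a b. a \<in> A' \<and> b \<in> B'}"
        proof
          fix ed assume "ed \<in> E'"
          then have "ed \<in> E" "x \<notin> ed" unfolding E'_def by auto
          then obtain a b where ab: "a \<in> A" "b \<in> B" "ed = {a,b}" using bip_edge[OF bip] by blast
          then have "a \<in> A'" "b \<in> B'" using \<open>x \<notin> ed\<close> unfolding A'_def B'_def by auto
          then show "ed \<in> {{a, b} |a b. a \<in> A' \<and> b \<in> B'}"
            using ab(3) by blast
        qed
      qed
      have gi': "girth_at_least E' 8" by (rule girth_mono[OF gi]) (auto simp: E'_def)
      have cardAB': "card A' + card B' = n - 1"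
      proof (cases "x \<in> A")
        case True
        then have "x \<notin> B" using dis by auto
        then have "B' = B" unfolding B'_def by simp
        moreover have "card A' = card A - 1" unfolding A'_def using True fA by (simp add: card_Diff_singleton)
        moreover have "card A \<ge> 1" using True fA by (simp add: Suc_le_eq card_gt_0_iff) blast
        ultimately show ?thesis unfolding n_def by simp
      next
        case False
        then have xB: "x \<in> B" using x(1) by simp
        have "A' = A" unfolding A'_def using False by simp
        moreover have "card B' = card B - 1" unfolding B'_def using xB fB by (simp add: card_Diff_singleton)
        moreover have "card B \<ge> 1" using xB fB by (simp add: Suc_le_eq card_gt_0_iff) blast
        ultimately show ?thesis unfolding n_def by simp
      qed
      have fE: "finite E" by (rule bip_finite[OF bip])
      have Ex: "{ed \<in> E. x \<in> ed} \<subseteq> (\<lambda>w. {x, w}) ` nbr E x"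
      proof
        fix ed assume "ed \<in> {ed \<in> E. x \<in> ed}"
        then have "ed \<in> E" "x \<in> ed" by auto
        then obtain a b where "ed = {a,b}" using bip_edge[OF bip] by blast
        then have "ed = {x, if a = x then b else a}" using \<open>x \<in> ed\<close> by auto
        then show "ed \<in> (\<lambda>w. {x, w}) ` nbr E x" using \<open>ed \<in> E\<close>
          by (intro image_eqI[of _ _ "if a = x then b else a"]) (auto simp: nbr_def)
      qed
      have "card {ed \<in> E. x \<in> ed} \<le> card ((\<lambda>w. {x, w}) ` nbr E x)"
        by (rule card_mono[OF _ Ex]) (simp add: nbr_finite[OF bip])
      also have "\<dots> \<le> card (nbr E x)" by (rule card_image_le) (simp add: nbr_finite[OF bip])
      also have "\<dots> \<le> 1" using x(2) by (simp add: deg_def)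
      finally have cx: "card {ed \<in> E. x \<in> ed} \<le> 1" .
      have "E = E' \<union> {ed \<in> E. x \<in> ed}" unfolding E'_def by auto
      moreover have "card (E' \<union> {ed \<in> E. x \<in> ed}) \<le> card E' + card {ed \<in> E. x \<in> ed}"
        by (rule card_Un_le)
      ultimately have "card E \<le> card E' + card {ed \<in> E. x \<in> ed}" by simp
      then have ee: "card E \<le> card E' + 1" using cx by linarith
      have n2: "n \<ge> 2"
      proof -
        have "card E \<ge> 1" using en pos unfolding n_def by linarith
        then have "E \<noteq> {}" by auto
        then obtain ed where "ed \<in> E" by blast
        then obtain a b where "a \<in> A" "b \<in> B" using bip_edge[OF bip] by blast
        then have "card A \<ge> 1" "card B \<ge> 1" using fA fB by (simp_all add: Suc_le_eq card_gt_0_iff; blast)+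
        then show ?thesis unfolding n_def by simp
      qed
      have lt: "card A' + card B' < card A + card B" using cardAB' n2 unfolding n_def by simp
      have pos': "card A' + card B' > 0" using cardAB' n2 by simp
      have IH: "fF (2 * real (card E') / real (card A' + card B')) \<le> real (card A' + card B') / 2"
        using less.hyps[OF lt bip' gi' pos'] .
      have rn: "real (card A' + card B') = real n - 1" using cardAB' n2 by simp
      have "2 * real (card E) / real n \<le> 2 * real (card E') / (real n - 1)"
      proof -
        have "real (card E) * (real n - 1) \<le> (real (card E) - 1) * real n"
          using en by (simp add: algebra_simps)
        also have "\<dots> \<le> real (card E') * real n" using ee npos by (simp add: mult_right_mono)
        finally have "real (card E) * (real n - 1) \<le> real (card E') * real n" .
        moreover have "real n - 1 > 0" using n2 by simp
        ultimately show ?thesis using npos by (simp add: field_simps)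
      qed
      then have "fF (2 * real (card E) / real n) \<le> fF (2 * real (card E') / (real n - 1))"
        by (rule fF_mono)
      also have "\<dots> \<le> (real n - 1) / 2" using IH rn by simp
      also have "\<dots> \<le> real n / 2" by simp
      finally show ?thesis unfolding n_def by simp
    qed
  qed
qed




lemma poly_key:
  fixes x :: real assumes x1: "x \<ge> 1"
  shows "fF ((81*x^3 + 54*x^2 - 18*x - 20) / (81*x^2)) > x^3"
proof -
  define Y where "Y = 81*x^3 + 54*x^2 - 18*x - 20"
  define k where "k = 81*x^2"
  have kpos: "k > 0" unfolding k_def using x1 by simp
  have "fF (Y / k) = (Y^3 - 2*Y^2*k + 2*Y*k^2) / k^3"
    unfolding fF_def using kpos by (simp add: field_simps power2_eq_square power3_eq_cube)
  moreover have "Y^3 - 2*Y^2*k + 2*Y*k^2 - x^3 * k^3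
      = 87480*x^4 + 91368*x^3 - 19440*x^2 - 21600*x - 8000"
    unfolding Y_def k_def by algebra
  moreover have "87480*x^4 + 91368*x^3 - 19440*x^2 - 21600*x - 8000 > 0"
  proof -
    have a: "x^2 \<le> x^4" using x1 by (intro power_increasing) auto
    have b: "x \<le> x^4" using x1 power_increasing[of 1 4 x] by simp
    have c: "1 \<le> x^4" using x1 by simp
    have d: "0 \<le> x^3" using x1 by simp
    show ?thesis using a b c d by linarith
  qed
  ultimately have "(Y^3 - 2*Y^2*k + 2*Y*k^2) / k^3 > x^3"
    using kpos by (simp add: field_simps)
  then show ?thesis using \<open>fF (Y / k) = _\<close> unfolding Y_def k_def by simp
qed

theorem corollary4p9:
  fixes A B :: "'a set" and E :: "'a set set" and v :: nat
  assumes "bipartite_graph A B E"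
    and "card A = v" and "card B = v"
    and "v \<ge> 1"
    and "girth_at_least E 8"
  shows "real (card E) < real v powr (4/3) + 2/3 * real v - 2/9 * real v powr (2/3)
                          - 20/81 * real v powr (1/3)"
proof -
  have vpos: "real v > 0" using assms(4) by simp
  have M: "fF (2 * real (card E) / real (card A + card B)) \<le> real (card A + card B) / 2"
    by (rule mainL[OF assms(1) assms(5)]) (use assms(2-4) in simp)
  have M2: "fF (real (card E) / real v) \<le> real v"
    using M assms(2,3) by simp
  define x where "x = real v powr (1/3)"
  have x1: "x \<ge> 1" unfolding x_def using assms(4) by (intro ge_one_powr_ge_zero) auto
  have xp: "\<And>n::nat. x ^ n = real v powr (real n / 3)"
    unfolding x_def using vpos by (simp add: powr_realpow[symmetric] powr_powr)
  have x3: "x^3 = real v" using xp[of 3] vpos by simp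
  have x4: "real v powr (4/3) = x^4" using xp[of 4] by simp
  have x2: "real v powr (2/3) = x^2" using xp[of 2] by simp
  have x1': "real v powr (1/3) = x" unfolding x_def ..
  show ?thesis
  proof (rule ccontr)
    assume "\<not> ?thesis"
    then have ge: "x^4 + 2/3 * x^3 - 2/9 * x^2 - 20/81 * x \<le> real (card E)"
      unfolding x4 x2 x1' x3 by simp
    have "(81*x^3 + 54*x^2 - 18*x - 20) / (81*x^2) = (x^4 + 2/3 * x^3 - 2/9 * x^2 - 20/81 * x) / x^3"
      using x1 by (simp add: field_simps power2_eq_square power3_eq_cube power4_eq_xxxx)
    also have "\<dots> \<le> real (card E) / real v"
      using ge x3 vpos by (simp add: divide_right_mono)
    finally have "fF ((81*x^3 + 54*x^2 - 18*x - 20) / (81*x^2)) \<le> fF (real (card E) / real v)"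
      by (rule fF_mono)
    then have "fF ((81*x^3 + 54*x^2 - 18*x - 20) / (81*x^2)) \<le> x^3" using M2 x3 by simp
    then show False using poly_key[OF x1] by simp
  qed
qed


end
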